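(* There is a formula $\phi_{\subseteq}(X_l,X_r,Y_l,Y_r)$ in the signature of $\mathcal{W}(I)$ such that for all $A,B\in\mathcal{P}_{\mathrm{fci}}(I)$, $$A\subseteq B\iff \mathcal{W}(I)\models\phi_{\subseteq}(l(A),r(A),l(B),r(B)).$$
   Context: Let $I$ be a dense linear order with left endpoint $0$ and no right endpoint. Let $\mathcal{P}_{\mathrm{fci}}(I)$ be the set of finite unions of closed intervals $[i,j]$, $[i,+\infty)$, $(-\infty,j]$ of $I$. For $A\in\mathcal{P}_{\mathrm{fci}}(I)$, $l(A)$ and $r(A)$ are the finite sets of left and right endpoints of $A$. Left endpoints are the minima of the maximal closed intervals composing $A$, and right endpoints are the maxima of the bounded ones. $\mathcal{W}(I)$ has universe the finite subsets of $I$ and signature $\{\cup,\cap,\bot,c_0,\min,\max,\mathrm{ips}\}$, interpreted as follows. - $\cup$ and $\cap$ are union and intersection. - $\bot$ is $\emptyset$, and $c_0$ is $\{0\}$. - $\min$ and $\max$ send a nonempty set to the singleton of its minimum, respectively maximum, and fix $\emptyset$. - $\mathrm{ips}(A,B)=\{i\in A: s_A(i)\in B\}$, where $s_A$ is the successor function of $A$. *)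

theory Defs
  imports Main
begin

definition fci :: "'a::linorder set \<Rightarrow> bool" where
  "fci A \<longleftrightarrow> (\<exists>F. finite F \<and>
      (\<forall>C\<in>F. \<exists>i j. C = {i..j} \<or> C = {i..} \<or> C = {..j}) \<and> A = \<Union>F)"

definition convex_set :: "'a::linorder set \<Rightarrow> bool" where
  "convex_set C \<longleftrightarrow> (\<forall>x y z. x \<in> C \<longrightarrow> z \<in> C \<longrightarrow> x \<le> y \<longrightarrow> y \<le> z \<longrightarrow> y \<in> C)"

definition components :: "'a::linorder set \<Rightarrow> 'a set set" where
  "components A = {C. C \<noteq> {} \<and> C \<subseteq> A \<and> convex_set C \<and>
      (\<forall>D. C \<subseteq> D \<and> D \<subseteq> A \<and> convex_set D \<longrightarrow> D = C)}"

definition lends :: "'a::linorder set \<Rightarrow> 'a set" where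
  "lends A = {x. \<exists>C\<in>components A. x \<in> C \<and> (\<forall>y\<in>C. x \<le> y)}"

definition rends :: "'a::linorder set \<Rightarrow> 'a set" where
  "rends A = {x. \<exists>C\<in>components A. x \<in> C \<and> (\<forall>y\<in>C. y \<le> x)}"

datatype wterm = WVar nat | WUn wterm wterm | WInt wterm wterm | WBot | WC0
  | WMin wterm | WMax wterm | WIps wterm wterm

datatype wform = WEq wterm wterm | WFalse | WNot wform | WAnd wform wform
  | WOr wform wform | WImp wform wform | WEx nat wform | WAll nat wform

definition wmin :: "'a::linorder set \<Rightarrow> 'a set" where
  "wmin S = (if S = {} then {} else {Min S})"

definition wmax :: "'a::linorder set \<Rightarrow> 'a set" where
  "wmax S = (if S = {} then {} else {Max S})"

text \<open>ips(A,B) = {i in A. s_A(i) in B}, s_A the successor function of A.\<close>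
definition wips :: "'a::linorder set \<Rightarrow> 'a set \<Rightarrow> 'a set" where
  "wips A B = {i \<in> A. \<exists>j. j \<in> B \<and> j \<in> A \<and> i < j \<and> (\<forall>k\<in>A. i < k \<longrightarrow> j \<le> k)}"

primrec weval :: "'a::linorder \<Rightarrow> (nat \<Rightarrow> 'a set) \<Rightarrow> wterm \<Rightarrow> 'a set" where
  "weval z e (WVar n) = e n"
| "weval z e (WUn s t) = weval z e s \<union> weval z e t"
| "weval z e (WInt s t) = weval z e s \<inter> weval z e t"
| "weval z e WBot = {}"
| "weval z e WC0 = {z}"
| "weval z e (WMin t) = wmin (weval z e t)"
| "weval z e (WMax t) = wmax (weval z e t)"
| "weval z e (WIps s t) = wips (weval z e s) (weval z e t)"

primrec wsat :: "'a::linorder \<Rightarrow> (nat \<Rightarrow> 'a set) \<Rightarrow> wform \<Rightarrow> bool" where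
  "wsat z e (WEq s t) = (weval z e s = weval z e t)"
| "wsat z e WFalse = False"
| "wsat z e (WNot f) = (\<not> wsat z e f)"
| "wsat z e (WAnd f g) = (wsat z e f \<and> wsat z e g)"
| "wsat z e (WOr f g) = (wsat z e f \<or> wsat z e g)"
| "wsat z e (WImp f g) = (wsat z e f \<longrightarrow> wsat z e g)"
| "wsat z e (WEx n f) = (\<exists>S. finite S \<and> wsat z (e(n := S)) f)"
| "wsat z e (WAll n f) = (\<forall>S. finite S \<longrightarrow> wsat z (e(n := S)) f)"

definition wenv :: "'a set list \<Rightarrow> nat \<Rightarrow> 'a set" where
  "wenv xs n = (if n < length xs then xs ! n else {})"

end

theory Submission
  imports Defs
begin

lemma convex_Un:
  fixes C D :: "'a::linorder set"
  assumes "convex_set C" "convex_set D" "w \<in> C" "w \<in> D"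
  shows "convex_set (C \<union> D)"
  unfolding convex_set_def
proof (intro allI impI)
  fix a b c assume h: "a \<in> C \<union> D" "c \<in> C \<union> D" "a \<le> b" "b \<le> c"
  show "b \<in> C \<union> D"
  proof (cases "b \<le> w")
    case True
    then show ?thesis using h assms unfolding convex_set_def by blast
  next
    case False
    then have "w \<le> b" by auto
    then show ?thesis using h assms unfolding convex_set_def by blast
  qed
qed

lemma compD:
  assumes "C \<in> components A"
  shows "C \<noteq> {}" "C \<subseteq> A" "convex_set C" "\<And>D. C \<subseteq> D \<Longrightarrow> D \<subseteq> A \<Longrightarrow> convex_set D \<Longrightarrow> D = C"
  using assms unfolding components_def by auto

lemma comp_disj:
  assumes "C \<in> components A" "C' \<in> components A" "w \<in> C" "w \<in> C'"
  shows "C = C'"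
proof -
  have cv: "convex_set (C \<union> C')" using convex_Un[OF compD(3)[OF assms(1)] compD(3)[OF assms(2)] assms(3,4)] .
  have "C \<union> C' = C" by (rule compD(4)[OF assms(1)]) (use cv compD(2)[OF assms(1)] compD(2)[OF assms(2)] in auto)
  moreover have "C \<union> C' = C'" by (rule compD(4)[OF assms(2)]) (use cv compD(2)[OF assms(1)] compD(2)[OF assms(2)] in auto)
  ultimately show ?thesis by simp
qed

lemma comp_exists:
  fixes A :: "'a::linorder set"
  assumes "x \<in> A"
  shows "\<exists>C\<in>components A. x \<in> C"
proof -
  define Cx where "Cx = \<Union>{D. convex_set D \<and> D \<subseteq> A \<and> x \<in> D}"
  have s: "convex_set {x}" unfolding convex_set_def by auto
  have xin: "x \<in> Cx" unfolding Cx_def using s assms by blast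
  have sub: "Cx \<subseteq> A" unfolding Cx_def by blast
  have cv: "convex_set Cx" unfolding convex_set_def
  proof (intro allI impI)
    fix a b c assume h: "a \<in> Cx" "c \<in> Cx" "a \<le> b" "b \<le> c"
    obtain D1 where D1: "convex_set D1" "D1 \<subseteq> A" "x \<in> D1" "a \<in> D1" using h(1) unfolding Cx_def by blast
    obtain D2 where D2: "convex_set D2" "D2 \<subseteq> A" "x \<in> D2" "c \<in> D2" using h(2) unfolding Cx_def by blast
    have "convex_set (D1 \<union> D2)" using convex_Un D1 D2 by blast
    then have "b \<in> D1 \<union> D2" using h D1 D2 unfolding convex_set_def by blast
    moreover have "D1 \<union> D2 \<subseteq> Cx" unfolding Cx_def using D1 D2 \<open>convex_set (D1 \<union> D2)\<close> by blast
    ultimately show "b \<in> Cx" by blast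
  qed
  have "Cx \<in> components A" unfolding components_def
  proof (intro CollectI conjI allI impI)
    show "Cx \<noteq> {}" using xin by blast
    show "Cx \<subseteq> A" by (rule sub)
    show "convex_set Cx" by (rule cv)
    fix D assume "Cx \<subseteq> D \<and> D \<subseteq> A \<and> convex_set D"
    then show "D = Cx" using xin unfolding Cx_def by blast
  qed
  then show ?thesis using xin by blast
qed

lemma fin_union_least:
  fixes S :: "'a::linorder set set"
  shows "finite S \<Longrightarrow> (\<And>G. G\<in>S \<Longrightarrow> G \<noteq> {} \<Longrightarrow> \<exists>m\<in>G. \<forall>y\<in>G. m \<le> y) \<Longrightarrow> \<Union>S \<noteq> {}
     \<Longrightarrow> \<exists>m\<in>\<Union>S. \<forall>y\<in>\<Union>S. m \<le> y"
proof (induction S rule: finite_induct)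
  case empty then show ?case by simp
next
  case (insert G S)
  show ?case
  proof (cases "\<Union>S = {}")
    case True
    then have "G \<noteq> {}" using insert by auto
    then obtain m where "m\<in>G" "\<forall>y\<in>G. m \<le> y" using insert.prems(1) by blast
    then show ?thesis using True by auto
  next
    case False
    then obtain m where m: "m\<in>\<Union>S" "\<forall>y\<in>\<Union>S. m \<le> y" using insert by auto
    show ?thesis
    proof (cases "G = {}")
      case True then show ?thesis using m by auto
    next
      case False
      then obtain m' where m': "m'\<in>G" "\<forall>y\<in>G. m' \<le> y" using insert.prems(1) by blast
      show ?thesis
      proof (cases "m \<le> m'")
        case True
        have "\<forall>y\<in>\<Union>(insert G S). m \<le> y"
        proof
          fix y assume "y \<in> \<Union>(insert G S)"
          then have "y \<in> G \<or> y \<in> \<Union>S" by blast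
          then show "m \<le> y" using m m' True by (meson order_trans)
        qed
        then show ?thesis using m by blast
      next
        case False
        have "\<forall>y\<in>\<Union>(insert G S). m' \<le> y"
        proof
          fix y assume "y \<in> \<Union>(insert G S)"
          then have "y \<in> G \<or> y \<in> \<Union>S" by blast
          then show "m' \<le> y" using m m' False by (meson order_trans nle_le)
        qed
        then show ?thesis using m' by blast
      qed
    qed
  qed
qed

lemma fin_union_greatest:
  fixes S :: "'a::linorder set set"
  shows "finite S \<Longrightarrow> (\<And>G. G\<in>S \<Longrightarrow> G \<noteq> {} \<Longrightarrow> \<exists>m\<in>G. \<forall>y\<in>G. y \<le> m) \<Longrightarrow> \<Union>S \<noteq> {}
     \<Longrightarrow> \<exists>m\<in>\<Union>S. \<forall>y\<in>\<Union>S. y \<le> m"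
proof (induction S rule: finite_induct)
  case empty then show ?case by simp
next
  case (insert G S)
  show ?case
  proof (cases "\<Union>S = {}")
    case True
    then have "G \<noteq> {}" using insert by auto
    then obtain m where "m\<in>G" "\<forall>y\<in>G. y \<le> m" using insert.prems(1) by blast
    then show ?thesis using True by auto
  next
    case False
    then obtain m where m: "m\<in>\<Union>S" "\<forall>y\<in>\<Union>S. y \<le> m" using insert by auto
    show ?thesis
    proof (cases "G = {}")
      case True then show ?thesis using m by auto
    next
      case False
      then obtain m' where m': "m'\<in>G" "\<forall>y\<in>G. y \<le> m'" using insert.prems(1) by blast
      show ?thesis
      proof (cases "m \<le> m'")
        case True
        have "\<forall>y\<in>\<Union>(insert G S). y \<le> m'"
        proof
          fix y assume "y \<in> \<Union>(insert G S)"
          then have "y \<in> G \<or> y \<in> \<Union>S" by blast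
          then show "y \<le> m'" using m m' True by (meson order_trans)
        qed
        then show ?thesis using m' by blast
      next
        case False
        have "\<forall>y\<in>\<Union>(insert G S). y \<le> m"
        proof
          fix y assume "y \<in> \<Union>(insert G S)"
          then have "y \<in> G \<or> y \<in> \<Union>S" by blast
          then show "y \<le> m" using m m' False by (meson order_trans nle_le)
        qed
        then show ?thesis using m by blast
      qed
    qed
  qed
qed

lemma gen_sub:
  assumes "C \<in> components A" "convex_set G" "G \<subseteq> A" "w \<in> G" "w \<in> C"
  shows "G \<subseteq> C"
proof -
  have cv: "convex_set (C \<union> G)" using convex_Un[OF compD(3)[OF assms(1)] assms(2) assms(5,4)] .
  have "C \<union> G = C" by (rule compD(4)[OF assms(1)]) (use cv compD(2)[OF assms(1)] assms(3) in auto)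
  then show ?thesis by blast
qed

lemma cv_gens:
  "convex_set {i..(j::'a::linorder)}" "convex_set {(i::'a::linorder)..}" "convex_set {..(j::'a::linorder)}"
  unfolding convex_set_def atLeastAtMost_iff atLeast_iff atMost_iff by (meson order_trans)+

lemma gen_cases:
  assumes "\<forall>G\<in>F. \<exists>i j. G = {i..j} \<or> G = {i..} \<or> G = {..(j::'a::linorder)}" "G \<in> F"
  obtains i j where "G = {i..j}" | i where "G = {i..}" | j where "G = {..j}"
proof -
  from assms have "\<exists>i j. G = {i..j} \<or> G = {i..} \<or> G = {..j}" by (rule bspec)
  then obtain i j where "G = {i..j} \<or> G = {i..} \<or> G = {..j}" by (elim exE)
  then show ?thesis using that by (elim disjE)
qed

lemma key:
  fixes A :: "'a::linorder set" and z :: 'a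
  assumes bot: "\<forall>x. z \<le> x" and F: "finite F"
    and gens: "\<forall>G\<in>F. \<exists>i j. G = {i..j} \<or> G = {i..} \<or> G = {..j}" and AF: "A = \<Union>F"
  shows "x \<in> A \<longleftrightarrow> (\<exists>l\<in>lends A. l \<le> x \<and> (\<forall>r\<in>rends A. l \<le> r \<longrightarrow> x \<le> r))"
proof -
  have gcv: "convex_set G" if G: "G \<in> F" for G
    using gen_cases[OF gens G] cv_gens by metis
  have gsub: "G \<subseteq> A" if "G \<in> F" for G using that AF by blast
  have CFC: "C = \<Union>{G\<in>F. G \<inter> C \<noteq> {}}" if C: "C \<in> components A" for C
  proof
    show "C \<subseteq> \<Union>{G\<in>F. G \<inter> C \<noteq> {}}" using compD(2)[OF C] AF by blast
    show "\<Union>{G\<in>F. G \<inter> C \<noteq> {}} \<subseteq> C" using gen_sub[OF C] gcv gsub by blast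
  qed
  have cmin: "\<exists>l\<in>C. \<forall>y\<in>C. l \<le> y" if C: "C \<in> components A" for C
  proof -
    have "\<exists>m\<in>\<Union>{G\<in>F. G \<inter> C \<noteq> {}}. \<forall>y\<in>\<Union>{G\<in>F. G \<inter> C \<noteq> {}}. m \<le> y"
    proof (rule fin_union_least)
      show "finite {G\<in>F. G \<inter> C \<noteq> {}}" using F by simp
      show "\<Union>{G\<in>F. G \<inter> C \<noteq> {}} \<noteq> {}" using CFC[OF C] compD(1)[OF C] by simp
      fix G assume "G \<in> {G\<in>F. G \<inter> C \<noteq> {}}" "G \<noteq> {}"
      then have GF: "G \<in> F" by blast
      show "\<exists>m\<in>G. \<forall>y\<in>G. m \<le> y"
      proof (rule gen_cases[OF gens GF])
        fix i j assume "G = {i..j}" then show ?thesis using \<open>G \<noteq> {}\<close> by (intro bexI[where x=i]) auto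
      next
        fix i assume "G = {i..}" then show ?thesis by (intro bexI[where x=i]) auto
      next
        fix j assume "G = {..j}" then show ?thesis using bot by (intro bexI[where x=z]) auto
      qed
    qed
    then show ?thesis using CFC[OF C] by simp
  qed
  have cnomax: "\<exists>i. {i..} \<subseteq> C" if C: "C \<in> components A" and nm: "\<not> (\<exists>m\<in>C. \<forall>y\<in>C. y \<le> m)" for C
  proof (rule ccontr)
    assume nn: "\<not> (\<exists>i. {i..} \<subseteq> C)"
    have "\<exists>m\<in>\<Union>{G\<in>F. G \<inter> C \<noteq> {}}. \<forall>y\<in>\<Union>{G\<in>F. G \<inter> C \<noteq> {}}. y \<le> m"
    proof (rule fin_union_greatest)
      show "finite {G\<in>F. G \<inter> C \<noteq> {}}" using F by simp
      show "\<Union>{G\<in>F. G \<inter> C \<noteq> {}} \<noteq> {}" using CFC[OF C] compD(1)[OF C] by simp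
      fix G assume G: "G \<in> {G\<in>F. G \<inter> C \<noteq> {}}" "G \<noteq> {}"
      then have "G \<subseteq> C" using CFC[OF C] by blast
      then have "\<not> (\<exists>i. G = {i..})" using nn by blast
      have GF: "G \<in> F" using G by blast
      show "\<exists>m\<in>G. \<forall>y\<in>G. y \<le> m"
      proof (rule gen_cases[OF gens GF])
        fix i j assume "G = {i..j}" then show ?thesis using \<open>G \<noteq> {}\<close> by (intro bexI[where x=j]) auto
      next
        fix i assume "G = {i..}" then show ?thesis using \<open>\<not> (\<exists>i. G = {i..})\<close> by blast
      next
        fix j assume "G = {..j}" then show ?thesis by (intro bexI[where x=j]) auto
      qed
    qed
    then show False using CFC[OF C] nm by simp
  qed
  show ?thesis
  proof
    assume x: "x \<in> A"
    obtain C where C: "C \<in> components A" "x \<in> C" using comp_exists[OF x] by blast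
    obtain l where l: "l \<in> C" "\<forall>y\<in>C. l \<le> y" using cmin[OF C(1)] by blast
    have "l \<in> lends A" unfolding lends_def using C l by blast
    moreover have "l \<le> x" using l C by blast
    moreover have "x \<le> r" if r: "r \<in> rends A" "l \<le> r" for r
    proof (rule ccontr)
      assume "\<not> x \<le> r"
      then have "r \<le> x" by auto
      then have rC: "r \<in> C" using compD(3)[OF C(1)] C(2) l(1) r(2) unfolding convex_set_def by blast
      obtain C' where C': "C' \<in> components A" "r \<in> C'" "\<forall>y\<in>C'. y \<le> r" using r(1) unfolding rends_def by blast
      have "C' = C" using comp_disj[OF C' (1) C(1) C'(2) rC] .
      then show False using C' C \<open>\<not> x \<le> r\<close> by blast
    qed
    ultimately show "\<exists>l\<in>lends A. l \<le> x \<and> (\<forall>r\<in>rends A. l \<le> r \<longrightarrow> x \<le> r)" by blast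
  next
    assume "\<exists>l\<in>lends A. l \<le> x \<and> (\<forall>r\<in>rends A. l \<le> r \<longrightarrow> x \<le> r)"
    then obtain l where l: "l \<in> lends A" "l \<le> x" "\<forall>r\<in>rends A. l \<le> r \<longrightarrow> x \<le> r" by blast
    obtain C where C: "C \<in> components A" "l \<in> C" "\<forall>y\<in>C. l \<le> y" using l(1) unfolding lends_def by blast
    have cvC: "convex_set C" and CA: "C \<subseteq> A" using compD[OF C(1)] by auto
    show "x \<in> A"
    proof (cases "\<exists>m\<in>C. \<forall>y\<in>C. y \<le> m")
      case True
      then obtain m where m: "m \<in> C" "\<forall>y\<in>C. y \<le> m" by blast
      have "m \<in> rends A" unfolding rends_def using C m by blast
      then have "x \<le> m" using l C m by blast
      then have "x \<in> C" using cvC C(2) m(1) l(2) unfolding convex_set_def by blast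
      then show ?thesis using CA by blast
    next
      case False
      then obtain i where i: "{i..} \<subseteq> C" using cnomax[OF C(1)] by blast
      show ?thesis
      proof (cases "i \<le> x")
        case True then show ?thesis using i CA by auto
      next
        case False
        then have "x \<le> i" by auto
        moreover have "i \<in> C" using i by auto
        ultimately have "x \<in> C" using cvC C(2) l(2) unfolding convex_set_def by blast
        then show ?thesis using CA by blast
      qed
    qed
  qed
qed

lemma memfci:
  fixes z :: "'a::linorder" and A :: "'a set"
  assumes bot: "\<forall>x. z \<le> x" and fA: "fci A"
  shows "x \<in> A \<longleftrightarrow> (\<exists>l\<in>lends A. l \<le> x \<and> (\<forall>r\<in>rends A. l \<le> r \<longrightarrow> x \<le> r))"
proof -
  obtain F where F: "finite F" "\<forall>C\<in>F. \<exists>i j. C = {i..j} \<or> C = {i..} \<or> C = {..j}" "A = \<Union>F"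
    using fA unfolding fci_def by (elim exE conjE)
  from key[OF bot F(1) F(2) F(3)] show ?thesis .
qed

definition wsing :: "nat \<Rightarrow> wform" where
  "wsing n = WAnd (WNot (WEq (WVar n) WBot)) (WEq (WMin (WVar n)) (WVar n))"

definition wle :: "nat \<Rightarrow> nat \<Rightarrow> wform" where
  "wle m n = WEq (WMin (WUn (WVar m) (WVar n))) (WVar m)"

definition wmem :: "nat \<Rightarrow> nat \<Rightarrow> wform" where
  "wmem m k = WEq (WInt (WVar m) (WVar k)) (WVar m)"

definition wallp :: "nat \<Rightarrow> wform \<Rightarrow> wform" where
  "wallp n P = WAll n (WImp (wsing n) P)"

definition wexp :: "nat \<Rightarrow> wform \<Rightarrow> wform" where
  "wexp n P = WEx n (WAnd (wsing n) P)"

definition winS :: "nat \<Rightarrow> nat \<Rightarrow> nat \<Rightarrow> wform" where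
  "winS X L R = wexp 5 (WAnd (WAnd (wmem 5 L) (wle 5 X))
      (wallp 6 (WImp (WAnd (wmem 6 R) (wle 5 6)) (wle X 6))))"

definition wphi :: wform where
  "wphi = wallp 4 (WImp (winS 4 0 1) (winS 4 2 3))"

lemma wsing_sem: "wsat z e (wsing n) \<longleftrightarrow> (\<exists>x. e n = {x})"
proof
  assume "wsat z e (wsing n)"
  then have h: "e n \<noteq> {}" "wmin (e n) = e n" by (simp_all add: wsing_def)
  then have "e n = {Min (e n)}" unfolding wmin_def by simp
  then show "\<exists>x. e n = {x}" by (rule exI)
next
  assume "\<exists>x. e n = {x}"
  then obtain x where "e n = {x}" by (elim exE)
  then show "wsat z e (wsing n)" by (simp add: wsing_def wmin_def)
qed

lemma wallp_sem: "wsat (z::'a::linorder) e (wallp n P) \<longleftrightarrow> (\<forall>x. wsat z (e(n := {x})) P)"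
proof
  assume h: "wsat z e (wallp n P)"
  show "\<forall>x. wsat z (e(n := {x})) P"
  proof
    fix x :: 'a
    have "finite {x}" by simp
    moreover have "wsat z (e(n := {x})) (wsing n)" by (simp add: wsing_sem)
    ultimately show "wsat z (e(n := {x})) P" using h by (simp add: wallp_def)
  qed
next
  assume h: "\<forall>x. wsat z (e(n := {x})) P"
  show "wsat z e (wallp n P)" unfolding wallp_def wsat.simps
  proof (intro allI impI)
    fix S assume "wsat z (e(n := S)) (wsing n)"
    then obtain x where "S = {x}" by (auto simp: wsing_sem)
    then show "wsat z (e(n := S)) P" using h by simp
  qed
qed

lemma wexp_sem: "wsat z e (wexp n P) \<longleftrightarrow> (\<exists>x. wsat z (e(n := {x})) P)"
proof
  assume "wsat z e (wexp n P)"
  then obtain S where S: "finite S" "wsat z (e(n := S)) (wsing n)" "wsat z (e(n := S)) P"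
    by (auto simp: wexp_def)
  then obtain x where "S = {x}" by (auto simp: wsing_sem)
  then show "\<exists>x. wsat z (e(n := {x})) P" using S by blast
next
  assume "\<exists>x. wsat z (e(n := {x})) P"
  then obtain x where h: "wsat z (e(n := {x})) P" by (elim exE)
  have "wsat z (e(n := {x})) (wsing n)" by (simp add: wsing_sem)
  then show "wsat z e (wexp n P)" unfolding wexp_def wsat.simps using h
    by (intro exI[where x="{x}"]) simp
qed

lemma wle_sem: "e m = {x} \<Longrightarrow> e n = {y} \<Longrightarrow> wsat z e (wle m n) \<longleftrightarrow> x \<le> y"
  by (cases "x \<le> y") (simp_all add: wle_def wmin_def insert_commute min_def)

lemma wmem_sem: "e m = {x} \<Longrightarrow> wsat z e (wmem m k) \<longleftrightarrow> x \<in> e k"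
  by (auto simp: wmem_def)

lemma winS_sem:
  assumes "e X = {x}" "X \<noteq> 5" "X \<noteq> 6" "L \<noteq> 5" "L \<noteq> 6" "R \<noteq> 5" "R \<noteq> 6"
  shows "wsat z e (winS X L R) \<longleftrightarrow> (\<exists>l\<in>e L. l \<le> x \<and> (\<forall>r\<in>e R. l \<le> r \<longrightarrow> x \<le> r))"
  using assms unfolding winS_def
  by (simp add: wexp_sem wallp_sem wle_sem wmem_sem Bex_def Ball_def imp_conjL)

theorem proposition6p3:
  fixes z :: "'a::linorder"
  assumes dense: "\<forall>x y::'a. x < y \<longrightarrow> (\<exists>w. x < w \<and> w < y)"
    and left_endpoint: "\<forall>x. z \<le> x"
    and no_right_endpoint: "\<forall>x::'a. \<exists>y. x < y"
  shows "\<exists>\<phi>. \<forall>A B :: 'a set. fci A \<longrightarrow> fci B \<longrightarrow>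
           (A \<subseteq> B \<longleftrightarrow> wsat z (wenv [lends A, rends A, lends B, rends B]) \<phi>)"
proof (rule exI[where x=wphi], intro allI impI)
  fix A B :: "'a set"
  assume fA: "fci A" and fB: "fci B"
  have memA: "x \<in> A \<longleftrightarrow> (\<exists>l\<in>lends A. l \<le> x \<and> (\<forall>r\<in>rends A. l \<le> r \<longrightarrow> x \<le> r))" for x
    by (rule memfci[OF left_endpoint fA])
  have memB: "x \<in> B \<longleftrightarrow> (\<exists>l\<in>lends B. l \<le> x \<and> (\<forall>r\<in>rends B. l \<le> r \<longrightarrow> x \<le> r))" for x
    by (rule memfci[OF left_endpoint fB])
  define e where "e = wenv [lends A, rends A, lends B, rends B]"
  have e0: "e 0 = lends A" "e 1 = rends A" "e (Suc 0) = rends A" "e 2 = lends B" "e 3 = rends B"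
    by (simp_all add: e_def wenv_def)
  have res: "(\<forall>x. x \<in> A \<longrightarrow> x \<in> B) \<longleftrightarrow> wsat z e wphi"
  proof -
    have step: "wsat z (e(4 := {x})) (WImp (winS 4 0 1) (winS 4 2 3)) \<longleftrightarrow> (x \<in> A \<longrightarrow> x \<in> B)" for x
    proof -
      let ?e = "e(4 := {x})"
      have a: "wsat z ?e (winS 4 0 1) \<longleftrightarrow> (\<exists>l\<in>?e 0. l \<le> x \<and> (\<forall>r\<in>?e 1. l \<le> r \<longrightarrow> x \<le> r))"
        by (rule winS_sem) simp_all
      have b: "wsat z ?e (winS 4 2 3) \<longleftrightarrow> (\<exists>l\<in>?e 2. l \<le> x \<and> (\<forall>r\<in>?e 3. l \<le> r \<longrightarrow> x \<le> r))"
        by (rule winS_sem) simp_all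
      have c: "?e 0 = lends A" "?e 1 = rends A" "?e 2 = lends B" "?e 3 = rends B"
        using e0 by simp_all
      have A1: "wsat z ?e (winS 4 0 1) = (x \<in> A)" 
      proof -
        have t1: "wsat z ?e (winS 4 0 1) = (\<exists>l\<in>lends A. l \<le> x \<and> (\<forall>r\<in>rends A. l \<le> r \<longrightarrow> x \<le> r))"
          using a unfolding c(1) c(2) .
        show ?thesis using t1 memA[of x] by (rule trans[OF _ sym])
      qed
      have B1: "wsat z ?e (winS 4 2 3) = (x \<in> B)" 
      proof -
        have t1: "wsat z ?e (winS 4 2 3) = (\<exists>l\<in>lends B. l \<le> x \<and> (\<forall>r\<in>rends B. l \<le> r \<longrightarrow> x \<le> r))"
          using b unfolding c(3) c(4) .
        show ?thesis using t1 memB[of x] by (rule trans[OF _ sym])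
      qed
      show ?thesis unfolding wsat.simps(6) A1 B1 by (rule refl)
    qed
    show ?thesis unfolding wphi_def wallp_sem step ..
  qed
  show "A \<subseteq> B \<longleftrightarrow> wsat z (wenv [lends A, rends A, lends B, rends B]) wphi"
    using res unfolding e_def by (simp only: subset_eq Ball_def)
qed

end
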